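(* Let $d$ be a positive integer, $M\subseteq\mathbb Z_{>0}$ a finite set, and $Q$ a non-empty finite set of primes such that the elements of $M\cup Q$ are pairwise coprime, $M\cap Q=\emptyset$, and $\min(Q)>d$. Let $b_m\in\mathbb Z$ for $m\in M$ and $c_{q,i}\in\mathbb Z$ for $q\in Q$, $1\le i\le d$. Consider the system $\mathcal S$ of simultaneous congruences and non-congruences in the unknown $x$: $x\equiv b_m \pmod m$ for all $m\in M$, and $x\not\equiv c_{q,i}\pmod q$ for all $q\in Q$ and $1\le i\le d$. Then for every $k\in\mathbb Z$, $\mathcal S$ has a solution in the interval $\{k,k+1,\dots,k+\prod M\cdot E(Q,d)\}$, where $$E(Q,d)=\big((d+1)\cdot|Q|\big)^{4(d+1)^2(3+\ln\ln(|Q|+1))}.$$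
   Context: $\prod M$ denotes the product of all elements of $M$ (equal to $1$ if $M=\emptyset$); $|Q|$ is the cardinality of $Q$. *)

theory Defs
  imports "HOL-Analysis.Analysis" "HOL-Number_Theory.Number_Theory"
begin

definition E_bound :: "nat set \<Rightarrow> nat \<Rightarrow> real" where
  "E_bound Q d = (real (d + 1) * real (card Q)) powr
      (4 * real (d + 1)^2 * (3 + ln (ln (real (card Q) + 1))))"

end

theory Submission
  imports Defs
begin


fun SS :: "(nat \<Rightarrow> int set) \<Rightarrow> nat \<Rightarrow> nat list \<Rightarrow> int set \<Rightarrow> int" where
  "SS B m [] A = int (card A)"
| "SS B 0 (q#qs) A = int (card A)"
| "SS B (Suc m) (q#qs) A = SS B (Suc m) qs A - SS B m qs (A \<inter> B q)"

definition GG :: "(nat \<Rightarrow> int set) \<Rightarrow> nat list \<Rightarrow> int set \<Rightarrow> nat" where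
  "GG B qs A = card {x\<in>A. \<forall>q\<in>set qs. x \<notin> B q}"

lemma GG_Cons:
  assumes "finite A"
  shows "int (GG B (q#qs) A) = int (GG B qs A) - int (GG B qs (A \<inter> B q))"
proof -
  have e: "{x\<in>A. \<forall>p\<in>set qs. x \<notin> B p} = {x\<in>A. \<forall>p\<in>set (q#qs). x \<notin> B p} \<union> {x\<in>A \<inter> B q. \<forall>p\<in>set qs. x \<notin> B p}"
    by auto
  have "card {x\<in>A. \<forall>p\<in>set qs. x \<notin> B p} = card {x\<in>A. \<forall>p\<in>set (q#qs). x \<notin> B p} + card {x\<in>A \<inter> B q. \<forall>p\<in>set qs. x \<notin> B p}"
    unfolding e by (rule card_Un_disjoint) (use assms in auto)
  thus ?thesis unfolding GG_def by simp
qed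

lemma bonferroni:
  assumes "finite A"
  shows "(even m \<longrightarrow> int (GG B qs A) \<le> SS B m qs A) \<and> (odd m \<longrightarrow> SS B m qs A \<le> int (GG B qs A))"
  using assms
proof (induction qs arbitrary: m A)
  case Nil
  then show ?case by (simp add: GG_def)
next
  case (Cons q qs)
  show ?case
  proof (cases m)
    case 0
    have "GG B (q#qs) A \<le> card A" unfolding GG_def by (rule card_mono) (use Cons.prems in auto)
    then show ?thesis using 0 by simp
  next
    case (Suc m')
    have f2: "finite (A \<inter> B q)" using Cons.prems by auto
    note I1 = Cons.IH[OF Cons.prems, of m]
    note I2 = Cons.IH[OF f2, of m']
    show ?thesis using I1 I2 GG_Cons[OF Cons.prems, of B q qs] Suc by auto
  qed
qed

lemma SS_union:
  assumes "finite A" "finite A'" "A \<inter> A' = {}"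
  shows "SS B m qs (A \<union> A') = SS B m qs A + SS B m qs A'"
  using assms
proof (induction qs arbitrary: m A A')
  case Nil
  then show ?case by (simp add: card_Un_disjoint)
next
  case (Cons q qs)
  show ?case
  proof (cases m)
    case 0
    then show ?thesis using Cons.prems by (simp add: card_Un_disjoint)
  next
    case (Suc m')
    have e: "(A \<union> A') \<inter> B q = (A \<inter> B q) \<union> (A' \<inter> B q)" by auto
    have h: "SS B m' qs ((A \<union> A') \<inter> B q) = SS B m' qs (A \<inter> B q) + SS B m' qs (A' \<inter> B q)"
      unfolding e by (rule Cons.IH) (use Cons.prems in auto)
    show ?thesis using Suc Cons.IH[OF Cons.prems, of m] h by simp
  qed
qed

lemma SS_empty: "SS B m qs {} = 0"
  using SS_union[of "{}" "{}" B m qs] by simp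

lemma SS_UN:
  assumes "finite C" "\<And>c. c \<in> C \<Longrightarrow> finite (F c)"
    "\<And>c c'. c \<in> C \<Longrightarrow> c' \<in> C \<Longrightarrow> c \<noteq> c' \<Longrightarrow> F c \<inter> F c' = {}"
  shows "SS B m qs (\<Union>c\<in>C. F c) = (\<Sum>c\<in>C. SS B m qs (F c))"
  using assms
proof (induction C rule: finite_induct)
  case empty
  then show ?case by (simp add: SS_empty)
next
  case (insert c C)
  have "(\<Union>x\<in>insert c C. F x) = F c \<union> (\<Union>x\<in>C. F x)" by auto
  moreover have "SS B m qs (F c \<union> (\<Union>x\<in>C. F x)) = SS B m qs (F c) + SS B m qs (\<Union>x\<in>C. F x)"
    by (rule SS_union) (use insert in auto)
  ultimately show ?case using insert by auto
qed

fun TT :: "(nat \<Rightarrow> real) \<Rightarrow> nat \<Rightarrow> nat list \<Rightarrow> real" where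
  "TT x m [] = 1"
| "TT x 0 (q#qs) = 1"
| "TT x (Suc m) (q#qs) = TT x (Suc m) qs - x q * TT x m qs"

fun ER :: "(nat \<Rightarrow> real) \<Rightarrow> nat \<Rightarrow> nat list \<Rightarrow> real" where
  "ER w m [] = 1"
| "ER w 0 (q#qs) = 1"
| "ER w (Suc m) (q#qs) = ER w (Suc m) qs + w q * ER w m qs"

lemma TT_0 [simp]: "TT x 0 qs = 1" by (cases qs) auto
lemma ER_0 [simp]: "ER x 0 qs = 1" by (cases qs) auto

lemma ER_nonneg:
  assumes "\<forall>q\<in>set qs. 0 \<le> w q"
  shows "0 \<le> ER w m qs"
  using assms
proof (induction w m qs rule: ER.induct)
  case (3 w m q qs)
  have "0 \<le> ER w (Suc m) qs" using 3 by simp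
  moreover have "0 \<le> w q * ER w m qs" using 3 by simp
  ultimately show ?case by simp
qed auto

lemma ER_bound:
  assumes "\<forall>q\<in>set qs. 0 \<le> w q \<and> w q \<le> D"
  shows "ER w m qs \<le> (1 + D * length qs) ^ m"
  using assms
proof (induction qs arbitrary: m)
  case Nil
  then show ?case by simp
next
  case (Cons q qs)
  have D0: "D \<ge> 0" using Cons.prems by auto
  show ?case
  proof (cases m)
    case 0
    then show ?thesis by simp
  next
    case (Suc m')
    let ?a = "1 + D * length qs" and ?b = "1 + D * length (q#qs)"
    have "D * real (length qs) \<le> D * real (length (q#qs))" using D0 by (intro mult_left_mono) auto
    hence ab: "?a \<le> ?b" "0 \<le> ?a" using D0 by auto
    have h1: "ER w (Suc m') qs \<le> ?a ^ Suc m'" using Cons.IH[of "Suc m'"] Cons.prems by simp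
    have h2: "ER w m' qs \<le> ?a ^ m'" using Cons by auto
    have h3: "w q * ER w m' qs \<le> D * ?a ^ m'"
      apply (rule mult_mono) using Cons.prems h2 D0 ER_nonneg[of qs w m'] by auto
    have "ER w m qs' \<le> 0" if False for qs' using that by simp
    have "ER w (Suc m') (q#qs) \<le> ?a ^ Suc m' + D * ?a ^ m'" using h1 h3 by simp
    also have "\<dots> = ?a ^ m' * (?a + D)" by (simp add: algebra_simps)
    also have "\<dots> \<le> ?b ^ m' * ?b"
      apply (rule mult_mono) using ab D0 by (auto intro: power_mono simp: algebra_simps)
    finally show ?thesis using Suc by (simp add: mult.commute)
  qed
qed

lemma pow_add_ge:
  fixes s x :: real assumes "0 \<le> s" "0 \<le> x"
  shows "s ^ Suc k + real (Suc k) * x * s ^ k \<le> (s + x) ^ Suc k"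
proof (induction k)
  case 0 then show ?case by simp
next
  case (Suc k)
  have "s ^ Suc (Suc k) + real (Suc (Suc k)) * x * s ^ Suc k
      \<le> (s + x) * (s ^ Suc k + real (Suc k) * x * s ^ k)"
    using assms by (simp add: algebra_simps)
  also have "\<dots> \<le> (s + x) * (s + x) ^ Suc k"
    by (rule mult_left_mono[OF Suc]) (use assms in auto)
  finally show ?case by simp
qed

definition PP :: "(nat \<Rightarrow> real) \<Rightarrow> nat list \<Rightarrow> real" where
  "PP x qs = (\<Prod>q\<leftarrow>qs. 1 - x q)"

definition sx :: "(nat \<Rightarrow> real) \<Rightarrow> nat list \<Rightarrow> real" where
  "sx x qs = (\<Sum>q\<leftarrow>qs. x q)"

lemma PP_bounds:
  assumes "\<forall>q\<in>set qs. 0 \<le> x q \<and> x q \<le> 1"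
  shows "0 \<le> PP x qs \<and> PP x qs \<le> 1 \<and> 0 \<le> sx x qs"
  using assms by (induction qs) (auto simp: PP_def sx_def intro: mult_le_one)

lemma TT_PP:
  assumes "\<forall>q\<in>set qs. 0 \<le> x q \<and> x q \<le> 1"
  shows "\<bar>TT x m qs - PP x qs\<bar> \<le> sx x qs ^ Suc m / fact (Suc m)"
  using assms
proof (induction qs arbitrary: m)
  case Nil
  then show ?case by (simp add: PP_def sx_def)
next
  case (Cons q qs)
  have xq: "0 \<le> x q" "x q \<le> 1" using Cons.prems by auto
  have pb: "0 \<le> PP x qs" "PP x qs \<le> 1" "0 \<le> sx x qs" using PP_bounds Cons.prems by auto
  have PPc: "PP x (q#qs) = (1 - x q) * PP x qs" by (simp add: PP_def)
  have sxc: "sx x (q#qs) = x q + sx x qs" by (simp add: sx_def)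
  show ?case
  proof (cases m)
    case 0
    have "\<bar>1 - PP x qs\<bar> \<le> sx x qs" using Cons.IH[of 0] Cons.prems by (simp add: PP_def sx_def)
    moreover have "x q * PP x qs \<le> x q" using xq pb mult_left_mono[of "PP x qs" 1 "x q"] by simp
    moreover have "0 \<le> x q * PP x qs" using xq pb by simp
    ultimately show ?thesis using 0 PPc sxc pb by (simp add: algebra_simps abs_if split: if_splits)
  next
    case (Suc m')
    let ?s = "sx x qs"
    have h1: "\<bar>TT x (Suc m') qs - PP x qs\<bar> \<le> ?s ^ Suc (Suc m') / fact (Suc (Suc m'))"
      by (rule Cons.IH) (use Cons.prems in auto)
    have h2: "\<bar>TT x m' qs - PP x qs\<bar> \<le> ?s ^ Suc m' / fact (Suc m')"
      by (rule Cons.IH) (use Cons.prems in auto)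
    have "TT x m (q#qs) - PP x (q#qs) = (TT x (Suc m') qs - PP x qs) - x q * (TT x m' qs - PP x qs)"
      using Suc PPc by (simp add: algebra_simps)
    hence "\<bar>TT x m (q#qs) - PP x (q#qs)\<bar> \<le> \<bar>TT x (Suc m') qs - PP x qs\<bar> + x q * \<bar>TT x m' qs - PP x qs\<bar>"
      using xq abs_triangle_ineq4[of "TT x (Suc m') qs - PP x qs" "x q * (TT x m' qs - PP x qs)"]
      by (simp add: abs_mult)
    also have "\<dots> \<le> ?s ^ Suc (Suc m') / fact (Suc (Suc m')) + x q * (?s ^ Suc m' / fact (Suc m'))"
      using h1 h2 xq by (intro add_mono mult_left_mono) auto
    also have "\<dots> = (?s ^ Suc (Suc m') + real (Suc (Suc m')) * x q * ?s ^ Suc m') / fact (Suc (Suc m'))"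
    proof -
      have ff: "(fact (Suc (Suc m')) :: real) = real (Suc (Suc m')) * fact (Suc m')" by simp
      have fp: "(fact (Suc m') :: real) > 0" by simp
      show ?thesis unfolding ff using fp by (simp add: field_simps del: fact_Suc of_nat_Suc)
    qed
    also have "\<dots> \<le> (?s + x q) ^ Suc (Suc m') / fact (Suc (Suc m'))"
      by (intro divide_right_mono pow_add_ge) (use pb xq in auto)
    finally show ?thesis using Suc sxc by (simp add: add.commute)
  qed
qed



lemma interval_count:
  fixes a b r P :: int
  assumes P: "P > 0" and ab: "a \<le> b"
  shows "\<bar>real (card {x\<in>{a..b}. [x = r] (mod P)}) - real_of_int (b - a + 1) / real_of_int P\<bar> \<le> 1"
proof -
  define r0 where "r0 = r mod P"
  define J where "J = {j::int. a \<le> r0 + j * P \<and> r0 + j * P \<le> b}"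
  have SJ: "{x\<in>{a..b}. [x = r] (mod P)} = (\<lambda>j. r0 + j * P) ` J"
  proof (intro equalityI subsetI)
    fix x assume "x \<in> {x\<in>{a..b}. [x = r] (mod P)}"
    hence x: "a \<le> x" "x \<le> b" "x mod P = r0" by (auto simp: cong_def r0_def)
    have "x = r0 + (x div P) * P" using x(3) by (metis add.commute mod_div_mult_eq)
    thus "x \<in> (\<lambda>j. r0 + j * P) ` J" unfolding J_def using x by (intro image_eqI[of _ _ "x div P"]) auto
  next
    fix x assume "x \<in> (\<lambda>j. r0 + j * P) ` J"
    then obtain j where j: "x = r0 + j * P" "j \<in> J" by auto
    have "x mod P = r0 mod P" using j(1) by simp
    hence "[x = r] (mod P)" by (simp add: cong_def r0_def)
    thus "x \<in> {x\<in>{a..b}. [x = r] (mod P)}" using j unfolding J_def by auto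
  qed
  have inj: "inj_on (\<lambda>j. r0 + j * P) J" using P by (auto simp: inj_on_def)
  define lo where "lo = \<lceil>real_of_int (a - r0) / real_of_int P\<rceil>"
  define hi where "hi = \<lfloor>real_of_int (b - r0) / real_of_int P\<rfloor>"
  have Pr: "real_of_int P > 0" using P by simp
  have J2: "J = {lo..hi}"
  proof -
    have "a \<le> r0 + j * P \<longleftrightarrow> lo \<le> j" for j
    proof -
      have "lo \<le> j \<longleftrightarrow> real_of_int (a - r0) / real_of_int P \<le> real_of_int j"
        unfolding lo_def by (rule ceiling_le_iff)
      also have "\<dots> \<longleftrightarrow> real_of_int (a - r0) \<le> real_of_int j * real_of_int P"
        using Pr by (simp add: divide_le_eq)
      also have "\<dots> \<longleftrightarrow> a \<le> r0 + j * P"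
        by (metis diff_le_eq add.commute of_int_le_iff of_int_mult)
      finally show ?thesis by simp
    qed
    moreover have "r0 + j * P \<le> b \<longleftrightarrow> j \<le> hi" for j
    proof -
      have "j \<le> hi \<longleftrightarrow> real_of_int j \<le> real_of_int (b - r0) / real_of_int P"
        unfolding hi_def by (rule le_floor_iff)
      also have "\<dots> \<longleftrightarrow> real_of_int j * real_of_int P \<le> real_of_int (b - r0)"
        using Pr by (simp add: le_divide_eq)
      also have "\<dots> \<longleftrightarrow> r0 + j * P \<le> b"
        by (metis le_diff_eq add.commute of_int_le_iff of_int_mult)
      finally show ?thesis by simp
    qed
    ultimately show ?thesis unfolding J_def by auto
  qed
  have card: "card {x\<in>{a..b}. [x = r] (mod P)} = nat (hi - lo + 1)"
    using card_image[OF inj] unfolding SJ by (simp add: J2)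
  have hi1: "real_of_int hi * real_of_int P \<le> real_of_int (b - r0)"
  proof -
    have "real_of_int hi \<le> real_of_int (b - r0) / real_of_int P" unfolding hi_def by (rule of_int_floor_le)
    thus ?thesis using Pr by (simp add: le_divide_eq)
  qed
  have lo1: "real_of_int (a - r0) \<le> real_of_int lo * real_of_int P"
  proof -
    have "real_of_int (a - r0) / real_of_int P \<le> real_of_int lo" unfolding lo_def by (rule le_of_int_ceiling)
    thus ?thesis using Pr by (simp add: divide_le_eq)
  qed
  have hi2: "real_of_int (b - r0) < (real_of_int hi + 1) * real_of_int P"
  proof -
    have "real_of_int (b - r0) / real_of_int P < real_of_int hi + 1" unfolding hi_def by (rule real_of_int_floor_add_one_gt)
    thus ?thesis using Pr by (simp add: divide_less_eq)
  qed
  have lo2: "(real_of_int lo - 1) * real_of_int P < real_of_int (a - r0)"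
  proof -
    have "real_of_int lo - 1 < real_of_int (a - r0) / real_of_int P" unfolding lo_def using ceiling_correct by blast
    thus ?thesis using Pr by (simp add: less_divide_eq)
  qed
  have i1: "hi * P \<le> b - r0" using hi1 by (metis of_int_le_iff of_int_mult)
  have i2: "a - r0 \<le> lo * P" using lo1 by (metis of_int_le_iff of_int_mult)
  have i3: "b - r0 < (hi + 1) * P" using hi2 by (metis of_int_less_iff of_int_mult of_int_add of_int_1)
  have i4: "(lo - 1) * P < a - r0" using lo2 by (metis of_int_less_iff of_int_mult of_int_diff of_int_1)
  have up: "(hi - lo + 1) * P \<le> (b - a + 1) + P" using i1 i2 by (simp add: algebra_simps)
  have dn: "(hi - lo + 1) * P \<ge> (b - a + 1) - P" using i3 i4 by (simp add: algebra_simps)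
  define N where "N = nat (hi - lo + 1)"
  have N1: "real_of_int (int N) * real_of_int P \<le> real_of_int (b - a + 1) + real_of_int P"
  proof (cases "hi - lo + 1 \<ge> 0")
    case True
    hence "int N = hi - lo + 1" unfolding N_def by simp
    hence "int N * P \<le> (b - a + 1) + P" using up by simp
    then show ?thesis by (metis of_int_add of_int_le_iff of_int_mult)
  next
    case False then show ?thesis using ab Pr unfolding N_def by simp
  qed
  have N2: "real_of_int (b - a + 1) - real_of_int P \<le> real_of_int (int N) * real_of_int P"
  proof (cases "hi - lo + 1 \<ge> 0")
    case True
    hence "int N = hi - lo + 1" unfolding N_def by simp
    hence "(b - a + 1) - P \<le> int N * P" using dn by simp
    then show ?thesis by (metis of_int_diff of_int_le_iff of_int_mult)
  next
    case False
    hence "(hi - lo + 1) * P \<le> 0" using P by (simp add: mult_nonpos_nonneg)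
    hence "b - a + 1 - P \<le> 0" using dn by simp
    moreover have "N = 0" unfolding N_def using False by simp
    moreover have "real_of_int (b - a + 1) - real_of_int P = real_of_int (b - a + 1 - P)" by simp
    ultimately show ?thesis by (simp del: of_int_diff of_int_add)
  qed
  have "real N \<le> real_of_int (b - a + 1) / real_of_int P + 1"
    using N1 Pr by (simp add: field_simps)
  moreover have "real_of_int (b - a + 1) / real_of_int P - 1 \<le> real N"
    using N2 Pr by (simp add: field_simps)
  ultimately show ?thesis using card unfolding N_def by simp
qed

lemma crt_step:
  fixes P q r c :: int
  assumes "P > 0" "q > 0" "coprime P q" "0 \<le> c" "c < q"
  shows "\<exists>r'. \<forall>x. ([x = r] (mod P) \<and> x mod q = c) \<longleftrightarrow> [x = r'] (mod P * q)"
proof -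
  obtain r' where r': "[r' = r] (mod P)" "[r' = c] (mod q)"
    using binary_chinese_remainder_int[OF assms(3)] by blast
  have "([x = r] (mod P) \<and> x mod q = c) \<longleftrightarrow> [x = r'] (mod P * q)" for x
  proof
    assume h: "[x = r] (mod P) \<and> x mod q = c"
    have "[x = c] (mod q)" using h assms(4,5) by (simp add: cong_def)
    hence 1: "[x = r'] (mod q)" using r'(2) by (meson cong_sym cong_trans)
    have 2: "[x = r'] (mod P)" using h r'(1) by (meson cong_sym cong_trans)
    show "[x = r'] (mod P * q)" by (rule coprime_cong_mult[OF 2 1 assms(3)])
  next
    assume h: "[x = r'] (mod P * q)"
    have 1: "[x = r'] (mod P)" using h cong_modulus_mult by blast
    have 2: "[x = r'] (mod q)" using h cong_modulus_mult[of x r' q P] by (simp add: mult.commute)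
    have "[x = c] (mod q)" using 2 r'(2) by (meson cong_trans)
    hence "x mod q = c" using assms(4,5) by (simp add: cong_def)
    moreover have "[x = r] (mod P)" using 1 r'(1) by (meson cong_trans)
    ultimately show "[x = r] (mod P) \<and> x mod q = c" by simp
  qed
  thus ?thesis by blast
qed



lemma count_main:
  fixes qs :: "nat list" and B :: "nat \<Rightarrow> int set" and C :: "nat \<Rightarrow> int set" and a b :: int
  assumes dist: "distinct qs" and pr: "\<forall>q\<in>set qs. prime q"
    and BC: "\<forall>q\<in>set qs. B q = {x. x mod int q \<in> C q} \<and> C q \<subseteq> {0..<int q}"
    and ab: "a \<le> b"
  shows "P > 0 \<Longrightarrow> (\<forall>q\<in>set qs. coprime P (int q)) \<Longrightarrow>
    \<bar>real_of_int (SS B m qs {x\<in>{a..b}. [x = r] (mod P)})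
       - real_of_int (b - a + 1) / real_of_int P * TT (\<lambda>q. real (card (C q)) / real q) m qs\<bar>
     \<le> ER (\<lambda>q. real (card (C q))) m qs"
  using dist pr BC
proof (induction qs arbitrary: m r P)
  case Nil
  then show ?case using interval_count[OF Nil(1) ab, of r] by simp
next
  case (Cons q qs)
  let ?A = "{x\<in>{a..b}. [x = r] (mod P)}"
  let ?L = "real_of_int (b - a + 1)"
  let ?x = "\<lambda>q. real (card (C q)) / real q"
  let ?w = "\<lambda>q. real (card (C q))"
  show ?case
  proof (cases m)
    case 0
    then show ?thesis using interval_count[OF Cons.prems(1) ab, of r] by simp
  next
    case (Suc m')
    have P: "P > 0" using Cons.prems by simp
    have qp: "prime q" using Cons.prems by simp
    hence q0: "int q > 0" by (simp add: prime_gt_0_nat)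
    have Bq: "B q = {x. x mod int q \<in> C q}" and Cq: "C q \<subseteq> {0..<int q}" using Cons.prems by auto
    have finC: "finite (C q)" using Cq finite_subset by blast
    have copq: "coprime P (int q)" using Cons.prems by simp
    have "\<forall>c\<in>C q. \<exists>r'. \<forall>x. ([x = r] (mod P) \<and> x mod int q = c) \<longleftrightarrow> [x = r'] (mod P * int q)"
      using crt_step[OF P q0 copq] Cq by auto
    then obtain F where F: "\<And>c x. c \<in> C q \<Longrightarrow> ([x = r] (mod P) \<and> x mod int q = c) \<longleftrightarrow> [x = F c] (mod P * int q)"
      by metis
    let ?Ac = "\<lambda>c. {x\<in>{a..b}. [x = F c] (mod P * int q)}"
    have AB: "?A \<inter> B q = (\<Union>c\<in>C q. ?Ac c)"
    proof (intro equalityI subsetI)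
      fix x assume "x \<in> ?A \<inter> B q"
      thus "x \<in> (\<Union>c\<in>C q. ?Ac c)" using F[of "x mod int q" x] Bq by auto
    next
      fix x assume "x \<in> (\<Union>c\<in>C q. ?Ac c)"
      then obtain c where "c \<in> C q" "x \<in> ?Ac c" by auto
      thus "x \<in> ?A \<inter> B q" using F[of c x] Bq by auto
    qed
    have disj: "?Ac c \<inter> ?Ac c' = {}" if "c \<in> C q" "c' \<in> C q" "c \<noteq> c'" for c c'
    proof (rule ccontr)
      assume "?Ac c \<inter> ?Ac c' \<noteq> {}"
      then obtain x where x: "[x = F c] (mod P * int q)" "[x = F c'] (mod P * int q)" by auto
      have "x mod int q = c" using F[OF that(1), of x] x(1) by blast
      moreover have "x mod int q = c'" using F[OF that(2), of x] x(2) by blast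
      ultimately show False using that(3) by simp
    qed
    have SU: "SS B m' qs (?A \<inter> B q) = (\<Sum>c\<in>C q. SS B m' qs (?Ac c))"
      unfolding AB by (rule SS_UN) (use finC disj in \<open>auto intro: finite_subset[of _ "{a..b}"]\<close>)
    have Pq: "P * int q > 0" using P q0 by simp
    have cop2: "\<forall>q'\<in>set qs. coprime (P * int q) (int q')"
    proof
      fix q' assume q': "q' \<in> set qs"
      have "q \<noteq> q'" using Cons.prems q' by auto
      moreover have "prime q'" using Cons.prems q' by auto
      ultimately have "coprime q q'" using qp by (simp add: primes_coprime)
      hence "coprime (int q) (int q')" by simp
      moreover have "coprime P (int q')" using Cons.prems q' by auto
      ultimately show "coprime (P * int q) (int q')" by simp
    qed
    have IH1: "\<bar>real_of_int (SS B (Suc m') qs ?A) - ?L / real_of_int P * TT ?x (Suc m') qs\<bar>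
        \<le> ER ?w (Suc m') qs"
      using Cons.IH[of P "Suc m'" r] Cons.prems by auto
    have IH2: "\<bar>real_of_int (SS B m' qs (?Ac c)) - ?L / real_of_int (P * int q) * TT ?x m' qs\<bar>
        \<le> ER ?w m' qs" for c
      using Cons.IH[OF Pq cop2, of m' "F c"] Cons.prems by auto
    have eqT: "?L / real_of_int P * (?x q * TT ?x m' qs) = (\<Sum>c\<in>C q. ?L / real_of_int (P * int q) * TT ?x m' qs)"
      using q0 by simp
    have "real_of_int (SS B m (q#qs) ?A) - ?L / real_of_int P * TT ?x m (q#qs)
       = (real_of_int (SS B (Suc m') qs ?A) - ?L / real_of_int P * TT ?x (Suc m') qs)
         - (\<Sum>c\<in>C q. real_of_int (SS B m' qs (?Ac c)) - ?L / real_of_int (P * int q) * TT ?x m' qs)"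
      using Suc SU eqT by (simp add: sum_subtractf algebra_simps)
    also have "\<bar>\<dots>\<bar> \<le> ER ?w (Suc m') qs + (\<Sum>c\<in>C q. ER ?w m' qs)"
    proof -
      have "\<bar>\<Sum>c\<in>C q. real_of_int (SS B m' qs (?Ac c)) - ?L / real_of_int (P * int q) * TT ?x m' qs\<bar>
          \<le> (\<Sum>c\<in>C q. \<bar>real_of_int (SS B m' qs (?Ac c)) - ?L / real_of_int (P * int q) * TT ?x m' qs\<bar>)"
        by (rule sum_abs)
      also have "\<dots> \<le> (\<Sum>c\<in>C q. ER ?w m' qs)" by (rule sum_mono) (rule IH2)
      finally show ?thesis using IH1 by linarith
    qed
    also have "\<dots> = ER ?w m (q#qs)" using Suc by simp
    finally show ?thesis .
  qed
qed



lemma prod_primes_dvd: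
  fixes S :: "nat set"
  assumes "finite S" "\<forall>p\<in>S. prime p" "\<forall>p\<in>S. p dvd n"
  shows "\<Prod>S dvd n"
  using assms
proof (induction S rule: finite_induct)
  case empty then show ?case by simp
next
  case (insert p S)
  have "coprime p (\<Prod>S)"
  proof (rule prod_coprime_right)
    fix i assume "i \<in> S"
    hence "prime i" "p \<noteq> i" using insert by auto
    thus "coprime p i" using insert(4) by (simp add: primes_coprime)
  qed
  thus ?case using insert by (simp add: divides_mult)
qed

lemma block_card:
  fixes y :: nat assumes "y \<ge> 1"
  shows "y ^ card {p. prime p \<and> y < p \<and> p \<le> 2*y} \<le> 2 ^ (2*y)"
proof -
  let ?S = "{p. prime p \<and> y < p \<and> p \<le> 2*y}"
  have fin: "finite ?S" by (rule finite_subset[of _ "{..2*y}"]) auto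
  have dv: "p dvd (2*y choose y)" if "p \<in> ?S" for p
  proof -
    have p: "prime p" "y < p" "p \<le> 2*y" using that by auto
    have "fact y * fact (2*y - y) * (2*y choose y) = fact (2*y)" by (rule binomial_fact_lemma) simp
    hence e: "fact y * fact y * (2*y choose y) = (fact (2*y) :: nat)" by simp
    have "p dvd fact (2*y)" using p by (simp add: prime_dvd_fact_iff)
    hence "p dvd fact y * fact y * (2*y choose y)" using e by simp
    moreover have "\<not> p dvd (fact y :: nat)" using p by (simp add: prime_dvd_fact_iff)
    ultimately show ?thesis using p(1) by (simp add: prime_dvd_mult_iff)
  qed
  have "\<Prod>?S dvd (2*y choose y)" by (rule prod_primes_dvd[OF fin]) (use dv in auto)
  hence "\<Prod>?S \<le> (2*y choose y)" by (rule dvd_imp_le) (simp add: zero_less_binomial)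
  also have "\<dots> \<le> 2 ^ (2*y)" by (rule binomial_le_pow2)
  finally have 1: "\<Prod>?S \<le> 2 ^ (2*y)" .
  have "y ^ card ?S = (\<Prod>p\<in>?S. y)" by simp
  also have "\<dots> \<le> \<Prod>?S" by (rule prod_mono) auto
  finally show ?thesis using 1 by linarith
qed

lemma block_card2:
  fixes j :: nat assumes "j \<ge> 1"
  shows "real j * real (card {p::nat. prime p \<and> 2^j < p \<and> p \<le> 2^(Suc j)}) \<le> 2 ^ Suc j"
proof -
  let ?c = "card {p::nat. prime p \<and> 2^j < p \<and> p \<le> 2^(Suc j)}"
  have "((2::nat) ^ j) ^ ?c \<le> 2 ^ (2 * 2^j)"
    using block_card[of "2^j"] by (simp add: mult.commute)
  hence "(2::nat) ^ (j * ?c) \<le> 2 ^ (2 * 2^j)" by (simp add: power_mult)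
  hence "j * ?c \<le> 2 * 2^j" by simp
  hence "real (j * ?c) \<le> real (2 * 2 ^ j)" by linarith
  thus ?thesis by simp
qed

lemma block_sum:
  fixes j :: nat assumes "j \<ge> 1"
  shows "(\<Sum>p\<in>{p::nat. prime p \<and> 2^j < p \<and> p \<le> 2^(Suc j)}. 1 / real p) \<le> 2 / real j"
proof -
  let ?S = "{p::nat. prime p \<and> 2^j < p \<and> p \<le> 2^(Suc j)}"
  have "(\<Sum>p\<in>?S. 1 / real p) \<le> (\<Sum>p\<in>?S. 1 / 2^j)"
    by (rule sum_mono) (auto simp: frac_le)
  also have "\<dots> = real (card ?S) / 2^j" by simp
  also have "\<dots> \<le> 2 / real j"
    using block_card2[OF assms] assms by (simp add: field_simps)
  finally show ?thesis .
qed

lemma prime_sum_pow2: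
  "(\<Sum>p\<in>{p::nat. prime p \<and> p \<le> 2^(Suc J)}. 1 / real p) \<le> 1/2 + 2 * harm J"
proof (induction J)
  case 0
  have "{p. prime p \<and> p \<le> 2^(Suc 0)} = {2::nat}"
  proof (intro equalityI subsetI)
    fix p :: nat assume "p \<in> {p. prime p \<and> p \<le> 2^(Suc 0)}"
    hence "prime p" "p \<le> 2" by auto
    hence "p = 2" using prime_ge_2_nat[of p] by linarith
    thus "p \<in> {2}" by simp
  next
    fix p :: nat assume "p \<in> {2}"
    thus "p \<in> {p. prime p \<and> p \<le> 2^(Suc 0)}" by simp
  qed
  then show ?case by (simp add: harm_def)
next
  case (Suc J)
  let ?A = "{p::nat. prime p \<and> p \<le> 2^(Suc J)}"
  let ?S = "{p::nat. prime p \<and> 2^(Suc J) < p \<and> p \<le> 2^(Suc (Suc J))}"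
  have e: "{p::nat. prime p \<and> p \<le> 2^(Suc (Suc J))} = ?A \<union> ?S" by auto
  have fA: "finite ?A" by (rule finite_subset[of _ "{..(2::nat)^(Suc J)}"]) auto
  have fS: "finite ?S" by (rule finite_subset[of _ "{..(2::nat)^(Suc (Suc J))}"]) auto
  have "(\<Sum>p\<in>{p::nat. prime p \<and> p \<le> 2^(Suc (Suc J))}. 1 / real p) = (\<Sum>p\<in>?A. 1 / real p) + (\<Sum>p\<in>?S. 1 / real p)"
    unfolding e by (rule sum.union_disjoint[OF fA fS]) auto
  also have "\<dots> \<le> 1/2 + 2 * harm J + 2 / real (Suc J)"
    using Suc block_sum[of "Suc J"] by simp
  also have "\<dots> = 1/2 + 2 * harm (Suc J)" by (simp add: harm_Suc field_simps)
  finally show ?case .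
qed

lemma harm_le_ln: "J \<ge> 1 \<Longrightarrow> harm J \<le> 1 + ln (real J)"
  using euler_mascheroni_sequence_decreasing[of 1 J] by (simp add: harm_def)

lemma sigma_bound:
  fixes Q :: "nat set"
  assumes fin: "finite Q" and pr: "\<forall>q\<in>Q. prime q" and n2: "card Q \<ge> 2"
  shows "(\<Sum>q\<in>Q. 1 / real q) \<le> 2 * ln (ln (real (card Q) + 1)) + 5"
proof -
  define n where "n = card Q"
  obtain J where J: "2^J \<le> n" "n < 2^(J+1)" using ex_power_ivl1[of 2 n] n2 unfolding n_def by auto
  have J1: "J \<ge> 1"
  proof (rule ccontr)
    assume "\<not> J \<ge> 1" hence "J = 0" by simp
    thus False using J n2 unfolding n_def by simp
  qed
  let ?Q1 = "{q\<in>Q. q \<le> n}" and ?Q2 = "{q\<in>Q. \<not> q \<le> n}"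
  have "(\<Sum>q\<in>Q. 1 / real q) = (\<Sum>q\<in>?Q1. 1 / real q) + (\<Sum>q\<in>?Q2. 1 / real q)"
  proof -
    have "Q = ?Q1 \<union> ?Q2" by auto
    moreover have "(\<Sum>q\<in>?Q1 \<union> ?Q2. 1 / real q) = (\<Sum>q\<in>?Q1. 1 / real q) + (\<Sum>q\<in>?Q2. 1 / real q)"
      by (rule sum.union_disjoint) (use fin in auto)
    ultimately show ?thesis by simp
  qed
  also have "(\<Sum>q\<in>?Q1. 1 / real q) \<le> (\<Sum>p\<in>{p::nat. prime p \<and> p \<le> 2^(Suc J)}. 1 / real p)"
  proof (rule sum_mono2)
    show "finite {p::nat. prime p \<and> p \<le> 2^(Suc J)}" by (rule finite_subset[of _ "{..(2::nat)^(Suc J)}"]) auto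
    show "?Q1 \<subseteq> {p::nat. prime p \<and> p \<le> 2^(Suc J)}" using pr J by auto
  qed auto
  also have "(\<Sum>q\<in>?Q2. 1 / real q) \<le> (\<Sum>q\<in>?Q2. 1 / real n)"
    by (rule sum_mono) (use n2 in \<open>auto simp: n_def frac_le\<close>)
  also have "\<dots> \<le> 1"
  proof -
    have "card ?Q2 \<le> n" unfolding n_def by (rule card_mono[OF fin]) auto
    thus ?thesis using n2 by (simp add: n_def field_simps)
  qed
  also have "(\<Sum>p\<in>{p::nat. prime p \<and> p \<le> 2^(Suc J)}. 1 / real p) \<le> 1/2 + 2 * harm J"
    by (rule prime_sum_pow2)
  finally have s1: "(\<Sum>q\<in>Q. 1 / real q) \<le> 3/2 + 2 * harm J" by simp
  have h: "harm J \<le> 1 + ln (real J)" using harm_le_ln J1 by simp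
  have l2: "ln 2 \<ge> (2/3::real)" by (rule ln2_ge_two_thirds)
  have "real J * ln 2 \<le> ln (real n)"
  proof -
    have "real (2^J) \<le> real n" using J by linarith
    moreover have "real n > 0" using n2 n_def by simp
    ultimately have "ln (real (2^J)) \<le> ln (real n)" by (subst ln_le_cancel_iff) auto
    thus ?thesis by (simp add: ln_realpow)
  qed
  hence Jle: "real J \<le> ln (real n) / ln 2" using l2 by (simp add: field_simps)
  have lnpos: "ln (real n) > 0" using n2 unfolding n_def by simp
  have f1: "ln (real J) \<le> ln (ln (real n) / ln 2)" using Jle J1 by (subst ln_le_cancel_iff) auto
  have f2: "ln (ln (real n) / ln 2) = ln (ln (real n)) + ln (1 / ln 2)" using lnpos l2 by (simp add: ln_div)
  have f3: "ln (1 / ln 2) \<le> 1 / ln (2::real) - 1" by (rule ln_le_minus_one) (use l2 in auto)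
  have f4: "1 / ln (2::real) - 1 \<le> 1/2" using l2 by (simp add: field_simps)
  have n0: "real n > 0" using n2 n_def by simp
  have "ln (real n) \<le> ln (real n + 1)" using n0 by (subst ln_le_cancel_iff) auto
  hence f5: "ln (ln (real n)) \<le> ln (ln (real n + 1))" using lnpos n0 by (subst ln_le_cancel_iff) auto
  have lJ: "ln (real J) \<le> ln (ln (real n + 1)) + 1/2" using f1 f2 f3 f4 f5 by linarith
  have "(\<Sum>q\<in>Q. 1 / real q) \<le> 2 * ln (ln (real n + 1)) + 5" using s1 h lJ by linarith
  thus ?thesis unfolding n_def .
qed



lemma e_gt_27: "exp 1 > (27/10::real)"
  using e_approx_32 by (simp add: abs_if split: if_split_asm)

lemma one_minus_ge_exp:
  fixes x DD :: real
  assumes "0 \<le> x" "DD \<ge> 1" "x \<le> (DD - 1) / DD"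
  shows "exp (- DD * x) \<le> 1 - x"
proof -
  have D0: "DD > 0" using assms by simp
  have h: "x * DD \<le> DD - 1" using assms D0 by (simp add: field_simps)
  have "(DD - 1) / DD \<le> 1" using D0 by simp
  hence x1: "x \<le> 1" using assms(3) by linarith
  have e1: "(1 + DD * x) * (1 - x) = 1 + x * (DD - 1 - x * DD)" by (simp add: algebra_simps)
  have "0 \<le> x * (DD - 1 - x * DD)" using assms(1) h by simp
  hence a: "(1 + DD * x) * (1 - x) \<ge> 1" using e1 by simp
  have "(1 + DD * x) * (1 - x) \<le> exp (DD * x) * (1 - x)"
    by (rule mult_right_mono) (use x1 in simp_all)
  hence "exp (DD * x) * (1 - x) \<ge> 1" using a by simp
  hence "1 / exp (DD * x) \<le> 1 - x" by (simp add: field_simps)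
  thus ?thesis by (simp add: exp_minus')
qed

lemma PP_lower:
  fixes DD :: real
  assumes "DD \<ge> 1" "\<forall>q\<in>set qs. 0 \<le> x q \<and> x q \<le> (DD - 1) / DD"
  shows "exp (- DD * sx x qs) \<le> PP x qs"
  using assms(2)
proof (induction qs)
  case Nil
  then show ?case by (simp add: PP_def sx_def)
next
  case (Cons q qs)
  have "exp (- DD * sx x (q#qs)) = exp (- DD * x q) * exp (- DD * sx x qs)"
    by (simp add: sx_def algebra_simps exp_add[symmetric])
  also have "\<dots> \<le> (1 - x q) * PP x qs"
  proof (rule mult_mono)
    have xq: "0 \<le> x q" "x q \<le> (DD - 1) / DD" using Cons.prems by auto
    moreover have "(DD - 1) / DD \<le> 1" using assms(1) by simp
    ultimately have "x q \<le> 1" by linarith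
    thus "exp (- DD * x q) \<le> 1 - x q" "0 \<le> 1 - x q"
      using one_minus_ge_exp[of "x q" DD] assms(1) xq by auto
    show "exp (- DD * sx x qs) \<le> PP x qs" using Cons by auto
    show "0 \<le> exp (- DD * sx x qs)" by simp
  qed
  also have "\<dots> = PP x (q#qs)" by (simp add: PP_def)
  finally show ?case .
qed

lemma pow_le_exp_fact: "real K ^ K \<le> exp (real K) * fact K"
proof (induction K)
  case 0 then show ?case by simp
next
  case (Suc K)
  show ?case
  proof (cases "K = 0")
    case True
    then show ?thesis using exp_ge_add_one_self[of 1] by simp
  next
    case False
    hence K: "real K \<ge> 1" by simp
    have "(1 + 1 / real K) \<le> exp (1 / real K)" by (rule exp_ge_add_one_self)
    hence "(1 + 1 / real K) ^ K \<le> exp (1 / real K) ^ K" by (rule power_mono) (use K in auto)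
    also have "\<dots> = exp 1" using K by (simp add: exp_of_nat_mult[symmetric])
    finally have a: "(1 + 1 / real K) ^ K \<le> exp 1" .
    have "real (Suc K) = real K * (1 + 1 / real K)" using K by (simp add: field_simps)
    hence "real (Suc K) ^ K = real K ^ K * (1 + 1 / real K) ^ K"
      by (simp only: power_mult_distrib)
    also have "\<dots> \<le> exp (real K) * fact K * exp 1"
    proof (rule mult_mono)
      show "real K ^ K \<le> exp (real K) * fact K" by (rule Suc.IH)
      show "(1 + 1 / real K) ^ K \<le> exp 1" by (rule a)
      show "0 \<le> exp (real K) * fact K" by simp
      show "0 \<le> (1 + 1 / real K) ^ K" using K by simp
    qed
    finally have b: "real (Suc K) ^ K \<le> exp (real K) * fact K * exp 1" .
    have "real (Suc K) ^ Suc K = real (Suc K) * real (Suc K) ^ K" by simp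
    also have "\<dots> \<le> real (Suc K) * (exp (real K) * fact K * exp 1)"
      by (rule mult_left_mono[OF b]) simp
    also have "\<dots> = exp (real (Suc K)) * fact (Suc K)"
    proof -
      have "exp (real (Suc K)) = exp (real K) * exp 1" by (simp add: exp_add[symmetric])
      moreover have "(fact (Suc K) :: real) = real (Suc K) * fact K" by simp
      ultimately show ?thesis by (simp only: mult_ac)
    qed
    finally show ?thesis .
  qed
qed

lemma tail_bound:
  fixes s g DD :: real and K :: nat
  assumes s: "s \<ge> 0" and g: "g \<ge> 5" and gD: "g * (ln g - 1) \<ge> DD" and K: "real K \<ge> g * s + 1"
  shows "s ^ K / fact K \<le> exp 1 / g * exp (- DD * s)"
proof -
  have Kp: "real K > 0" using K g s by (smt (verit) mult_nonneg_nonneg)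
  have e3: "exp 1 < (3::real)" using e_less_272 by simp
  have lg: "ln g \<ge> 1"
  proof -
    have "exp 1 \<le> g" using e3 g by simp
    thus ?thesis by (metis exp_le_cancel_iff exp_ln less_le_trans zero_less_one exp_gt_zero)
  qed
  define L where "L = ln g - 1"
  have L0: "L \<ge> 0" using lg L_def by simp
  have eg: "exp 1 / g = exp (- L)" using g by (simp add: L_def exp_diff exp_minus field_simps)
  have "s ^ K / fact K = (s ^ K * real K ^ K / fact K) / real K ^ K" using Kp by simp
  also have "\<dots> \<le> (s ^ K * exp (real K)) / real K ^ K"
  proof -
    have "real K ^ K / fact K \<le> exp (real K)" using pow_le_exp_fact[of K] by (simp add: field_simps)
    hence "s ^ K * (real K ^ K / fact K) \<le> s ^ K * exp (real K)" by (rule mult_left_mono) (use s in simp)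
    thus ?thesis using Kp by (intro divide_right_mono) (auto simp: field_simps)
  qed
  also have "\<dots> = (exp 1 * s / real K) ^ K"
    using Kp by (simp add: power_divide power_mult_distrib exp_of_nat_mult[symmetric] mult.commute)
  also have "\<dots> \<le> (exp 1 / g) ^ K"
  proof (rule power_mono)
    have "g * s \<le> real K" using K by simp
    hence "s / real K \<le> 1 / g" using Kp g by (simp add: field_simps)
    hence "exp 1 * (s / real K) \<le> exp 1 * (1 / g)" by (rule mult_left_mono) simp
    thus "exp 1 * s / real K \<le> exp 1 / g" by simp
    show "0 \<le> exp 1 * s / real K" using s Kp by simp
  qed
  also have "\<dots> = exp (- L * real K)" unfolding eg by (simp add: exp_of_nat_mult[symmetric] mult.commute)
  also have "\<dots> \<le> exp (- L * (g * s + 1))"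
    using K L0 by (simp add: mult_left_mono)
  also have "\<dots> = exp (- L) * exp (- (g * L) * s)" by (simp add: exp_add[symmetric] algebra_simps)
  also have "\<dots> \<le> exp (- L) * exp (- DD * s)"
  proof -
    have "DD * s \<le> (g * L) * s" using gD s unfolding L_def by (simp add: mult_right_mono)
    thus ?thesis by simp
  qed
  finally show ?thesis unfolding eg .
qed

lemma gamma_ok:
  fixes D :: nat assumes D2: "D \<ge> 2"
  shows "(real D + 3) * (ln (real D + 3) - 1) \<ge> real D"
proof -
  define DD where "DD = real D"
  have assms: "DD \<ge> 2" using D2 DD_def by simp
  have e: "exp 1 < (272/100::real)" by (rule e_less_272)
  have e0: "exp 1 > (0::real)" by simp
  show ?thesis
  proof (cases "DD \<le> 4")
    case True
    have "exp (8/5::real) ^ 5 = exp 1 ^ 8" by (simp add: exp_of_nat_mult[symmetric])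
    also have "\<dots> < (272/100) ^ 8" by (rule power_strict_mono) (use e e0 in auto)
    also have "\<dots> < (5::real) ^ 5" by (simp add: power_divide divide_less_eq)
    finally have "exp (8/5::real) < 5" by (rule power_less_imp_less_base) simp
    hence "8/5 < ln (5::real)" by (metis exp_less_cancel_iff exp_ln zero_less_numeral)
    moreover have "ln 5 \<le> ln (DD + 3)" using assms by simp
    ultimately have "ln (DD + 3) - 1 \<ge> 3/5" by simp
    hence "(DD + 3) * (ln (DD + 3) - 1) \<ge> (DD + 3) * (3/5)" by (rule mult_left_mono) (use assms in simp)
    hence "DD \<le> (DD + 3) * (ln (DD + 3) - 1)" using True by simp
    thus ?thesis unfolding DD_def .
  next
    case False
    have "exp (2::real) = exp 1 ^ 2" by (simp add: exp_of_nat_mult[symmetric])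
    also have "\<dots> < (272/100) ^ 2" by (rule power_strict_mono) (use e e0 in auto)
    also have "\<dots> < 8" by (simp add: power_divide divide_less_eq)
    finally have l8: "2 < ln (8::real)" by (metis exp_less_cancel_iff exp_ln zero_less_numeral)
    have "D \<ge> 5" using False DD_def by simp
    hence "DD \<ge> 5" using DD_def by simp
    moreover have "ln 8 \<le> ln (DD + 3)" using \<open>DD \<ge> 5\<close> by simp
    ultimately have "ln (DD + 3) - 1 \<ge> 1" using l8 by linarith
    hence "(DD + 3) * (ln (DD + 3) - 1) \<ge> (DD + 3) * 1" by (rule mult_left_mono) (use \<open>DD \<ge> 5\<close> in simp)
    hence "DD \<le> (DD + 3) * (ln (DD + 3) - 1)" by simp
    thus ?thesis unfolding DD_def .
  qed
qed



lemma crt_pair: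
  fixes P q u1 u2 :: int
  assumes "coprime P q"
  shows "\<exists>r'. \<forall>x. ([x = u1] (mod P) \<and> [x = u2] (mod q)) \<longleftrightarrow> [x = r'] (mod P * q)"
proof -
  obtain r' where r': "[r' = u1] (mod P)" "[r' = u2] (mod q)"
    using binary_chinese_remainder_int[OF assms] by blast
  have "([x = u1] (mod P) \<and> [x = u2] (mod q)) \<longleftrightarrow> [x = r'] (mod P * q)" for x
  proof
    assume h: "[x = u1] (mod P) \<and> [x = u2] (mod q)"
    have 1: "[x = r'] (mod q)" using h r'(2) by (meson cong_sym cong_trans)
    have 2: "[x = r'] (mod P)" using h r'(1) by (meson cong_sym cong_trans)
    show "[x = r'] (mod P * q)" by (rule coprime_cong_mult[OF 2 1 assms])
  next
    assume h: "[x = r'] (mod P * q)"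
    have 1: "[x = r'] (mod P)" using h cong_modulus_mult by blast
    have 2: "[x = r'] (mod q)" using h cong_modulus_mult[of x r' q P] by (simp add: mult.commute)
    show "[x = u1] (mod P) \<and> [x = u2] (mod q)" using 1 2 r' by (meson cong_trans)
  qed
  thus ?thesis by blast
qed

lemma crt_set:
  fixes M :: "nat set" and b :: "nat \<Rightarrow> int"
  assumes "finite M" "\<forall>u\<in>M. \<forall>v\<in>M. u \<noteq> v \<longrightarrow> coprime u v"
  shows "\<exists>r. \<forall>x::int. (\<forall>m\<in>M. [x = b m] (mod int m)) \<longleftrightarrow> [x = r] (mod int (\<Prod>M))"
  using assms
proof (induction M rule: finite_induct)
  case empty
  then show ?case by simp
next
  case (insert m M)
  obtain r where r: "\<forall>x::int. (\<forall>m\<in>M. [x = b m] (mod int m)) \<longleftrightarrow> [x = r] (mod int (\<Prod>M))"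
    using insert by auto
  have "coprime m (\<Prod>M)"
  proof (rule prod_coprime_right)
    fix i assume "i \<in> M"
    thus "coprime m i" using insert by auto
  qed
  hence "coprime (int m) (int (\<Prod>M))" by (simp only: coprime_int_iff)
  then obtain r' where r': "\<forall>x. ([x = b m] (mod int m) \<and> [x = r] (mod int (\<Prod>M))) \<longleftrightarrow> [x = r'] (mod int m * int (\<Prod>M))"
    using crt_pair by blast
  have pe: "int (\<Prod>(insert m M)) = int m * int (\<Prod>M)" using insert(1,2) by simp
  have "(\<forall>m'\<in>insert m M. [x = b m'] (mod int m')) \<longleftrightarrow> [x = r'] (mod int (\<Prod>(insert m M)))" for x
  proof -
    have "(\<forall>m'\<in>insert m M. [x = b m'] (mod int m')) \<longleftrightarrow> [x = b m] (mod int m) \<and> (\<forall>m'\<in>M. [x = b m'] (mod int m'))"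
      by blast
    also have "\<dots> \<longleftrightarrow> [x = b m] (mod int m) \<and> [x = r] (mod int (\<Prod>M))" using r by blast
    also have "\<dots> \<longleftrightarrow> [x = r'] (mod int m * int (\<Prod>M))" using r' by blast
    finally show ?thesis unfolding pe .
  qed
  thus ?case by blast
qed

lemma final_ineq:
  fixes d n K :: nat and s sg La :: real
  assumes d1: "d \<ge> 1" and n1: "n \<ge> 1" and s0: "s \<ge> 0" and sd: "s \<le> real d * sg"
    and c1: "n = 1 \<Longrightarrow> sg \<le> 1/2 \<and> La \<ge> -1"
    and c2: "n \<ge> 2 \<Longrightarrow> sg \<le> 2 * La + 5 \<and> La \<ge> 0"
    and K1: "K \<ge> 1" and K2: "real K \<le> (real d + 4) * s + 3"
  shows "(real K - 1) * ln (1 + real d * real n) + (real d + 1) * s + 1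
     \<le> 4 * (real d + 1)^2 * (3 + La) * ln ((real d + 1) * real n)"
proof -
  define D where "D = real d + 1"
  define l where "l = ln (D * real n)"
  have D2: "D \<ge> 2" using d1 D_def by simp
  have dD: "real d = D - 1" using D_def by simp
  have l2: "ln 2 \<ge> (2/3::real)" by (rule ln2_ge_two_thirds)
  have l1le: "ln (1 + real d * real n) \<le> l"
  proof -
    have "1 + real d * real n \<le> D * real n" using n1 D_def by (simp add: algebra_simps)
    moreover have "0 < 1 + real d * real n" by (simp add: add_pos_nonneg)
    ultimately show ?thesis unfolding l_def by (subst ln_le_cancel_iff) auto
  qed
  have l1ge: "ln (1 + real d * real n) \<ge> 0" by simp
  have lge: "l \<ge> 2/3"
  proof -
    have "D * 1 \<le> D * real n" by (rule mult_left_mono) (use n1 D2 in auto)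
    hence "(2::real) \<le> D * real n" using D2 by linarith
    hence "ln 2 \<le> l" unfolding l_def by (subst ln_le_cancel_iff) auto
    thus ?thesis using l2 by simp
  qed
  have "(D + 3) * s = (real d + 4) * s" using D_def by simp
  hence Km: "real K - 1 \<le> (D + 3) * s + 2" using K2 by linarith
  have Km0: "real K - 1 \<ge> 0" using K1 by simp
  have step1: "(real K - 1) * ln (1 + real d * real n) \<le> ((D + 3) * s + 2) * l"
    by (rule mult_mono) (use Km Km0 l1le l1ge in auto)
  show ?thesis
  proof (cases "n = 1")
    case True
    have sg: "sg \<le> 1/2" and La: "La \<ge> -1" using c1 True by auto
    have "real d * sg \<le> real d * (1/2)" by (rule mult_left_mono) (use sg in auto)
    hence sle: "s \<le> real d / 2" using sd by simp
    have b1: "D * s + 1 \<le> (3/2) * (D * s + 1) * l"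
    proof -
      have "(D * s + 1) * 1 \<le> (D * s + 1) * ((3/2) * l)" by (rule mult_left_mono) (use lge D2 s0 in auto)
      thus ?thesis by (simp add: algebra_simps)
    qed
    have "(real K - 1) * ln (1 + real d * real n) + D * s + 1
        \<le> ((D + 3) * s + 2 + (3/2) * (D * s + 1)) * l"
    proof -
      have "((D + 3) * s + 2 + (3/2) * (D * s + 1)) * l = ((D + 3) * s + 2) * l + (3/2) * (D * s + 1) * l"
        by (simp add: algebra_simps)
      thus ?thesis using step1 b1 by linarith
    qed
    also have "\<dots> \<le> (8 * D^2) * l"
    proof (rule mult_right_mono)
      have "(D + 3) * s \<le> (D + 3) * (real d / 2)" by (rule mult_left_mono) (use sle D2 in auto)
      moreover have "D * s \<le> D * (real d / 2)" by (rule mult_left_mono) (use sle D2 in auto)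
      moreover have "(D + 3) * (real d / 2) + 2 + (3/2) * (D * (real d / 2) + 1) \<le> 8 * D^2"
      proof -
        have "8 * D^2 - ((D + 3) * (real d / 2) + 2 + (3/2) * (D * (real d / 2) + 1)) = (27/4) * (D * (D - 2)) + (53/4) * D - 2"
          unfolding dD by (simp add: power2_eq_square field_simps)
        moreover have "D * (D - 2) \<ge> 0" using D2 by simp
        ultimately show ?thesis using D2 by linarith
      qed
      moreover have "(3/2) * (D * s + 1) = (3/2) * (D * s) + 3/2"
        "(3/2) * (D * (real d / 2) + 1) = (3/2) * (D * (real d / 2)) + 3/2" by (simp_all add: algebra_simps)
      ultimately show "(D + 3) * s + 2 + (3/2) * (D * s + 1) \<le> 8 * D^2" by linarith
      show "0 \<le> l" using lge by simp
    qed
    also have "\<dots> \<le> 4 * D^2 * (3 + La) * l"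
    proof (rule mult_right_mono)
      have "4 * D^2 * 2 \<le> 4 * D^2 * (3 + La)" by (rule mult_left_mono) (use La in auto)
      thus "8 * D^2 \<le> 4 * D^2 * (3 + La)" by simp
      show "0 \<le> l" using lge by simp
    qed
    finally show ?thesis unfolding D_def l_def by simp
  next
    case False
    hence n2: "n \<ge> 2" using n1 by simp
    have sg: "sg \<le> 2 * La + 5" and La: "La \<ge> 0" using c2 n2 by auto
    have "real d * sg \<le> real d * (2 * La + 5)" by (rule mult_left_mono) (use sg in auto)
    hence sle: "s \<le> real d * (2 * La + 5)" using sd by simp
    have lge4: "l \<ge> 4/3"
    proof -
      have "(4::real) \<le> D * real n"
      proof -
        have "(2::real) * 2 \<le> D * real n" by (rule mult_mono) (use D2 n2 in auto)
        thus ?thesis by simp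
      qed
      hence "ln 4 \<le> l" unfolding l_def by (subst ln_le_cancel_iff) auto
      moreover have "ln (4::real) = 2 * ln 2" using ln_realpow[of 2 2] by simp
      ultimately show ?thesis using l2 by simp
    qed
    have b1: "D * s + 1 \<le> (3/4) * (D * s + 1) * l"
    proof -
      have "(D * s + 1) * 1 \<le> (D * s + 1) * ((3/4) * l)" by (rule mult_left_mono) (use lge4 D2 s0 in auto)
      thus ?thesis by (simp add: algebra_simps)
    qed
    have "(real K - 1) * ln (1 + real d * real n) + D * s + 1
        \<le> ((D + 3) * s + 2 + (3/4) * (D * s + 1)) * l"
    proof -
      have "((D + 3) * s + 2 + (3/4) * (D * s + 1)) * l = ((D + 3) * s + 2) * l + (3/4) * (D * s + 1) * l"
        by (simp add: algebra_simps)
      thus ?thesis using step1 b1 by linarith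
    qed
    also have "\<dots> \<le> (4 * D^2 * (3 + La)) * l"
    proof (rule mult_right_mono)
      have e1: "(D + 3) * s + 2 + (3/4) * (D * s + 1) = ((7/4) * D + 3) * s + 11/4" by (simp add: field_simps)
      have "((7/4) * D + 3) * s \<le> ((7/4) * D + 3) * (real d * (2 * La + 5))"
        by (rule mult_left_mono) (use sle D2 in auto)
      moreover have "((7/4) * D + 3) * (real d * (2 * La + 5)) + 11/4 \<le> 4 * D^2 * (3 + La)"
      proof -
        have q1: "0 \<le> La * ((1/2) * D^2 - (5/2) * D + 6)"
        proof (rule mult_nonneg_nonneg)
          show "0 \<le> La" by (rule La)
          have "(1/2) * D^2 - (5/2) * D + 6 = (1/2) * (D - 5/2)^2 + 23/8" by (simp add: power2_eq_square algebra_simps)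
          thus "0 \<le> (1/2) * D^2 - (5/2) * D + 6" by simp
        qed
        have q2: "0 \<le> (13/4) * D^2 - (25/4) * D + 49/4"
        proof -
          have "(13/4) * D^2 - (25/4) * D + 49/4 = (13/4) * (D - 25/26)^2 + (49/4 - 625/208)"
            by (simp add: power2_eq_square algebra_simps)
          thus ?thesis by simp
        qed
        have "4 * D^2 * (3 + La) - (((7/4) * D + 3) * (real d * (2 * La + 5)) + 11/4)
           = La * ((1/2) * D^2 - (5/2) * D + 6) + ((13/4) * D^2 - (25/4) * D + 49/4)"
          unfolding dD by (simp add: power2_eq_square algebra_simps)
        thus ?thesis using q1 q2 by linarith
      qed
      ultimately show "(D + 3) * s + 2 + (3/4) * (D * s + 1) \<le> 4 * D^2 * (3 + La)" using e1 by linarith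
      show "0 \<le> l" using lge4 by simp
    qed
    finally show ?thesis unfolding D_def l_def by (simp add: mult.assoc)
  qed
qed



theorem theorem2:
  fixes d :: nat and M Q :: "nat set" and b :: "nat \<Rightarrow> int"
    and c :: "nat \<Rightarrow> nat \<Rightarrow> int" and k :: int
  assumes "d > 0"
    and "finite M" and "\<forall>m\<in>M. m > 0"
    and "finite Q" and "Q \<noteq> {}" and "\<forall>q\<in>Q. prime q"
    and "\<forall>u\<in>M \<union> Q. \<forall>v\<in>M \<union> Q. u \<noteq> v \<longrightarrow> coprime u v"
    and "M \<inter> Q = {}"
    and "Min Q > d"
  shows "\<exists>x::int. k \<le> x \<and> real_of_int x \<le> real_of_int k + real (\<Prod>M) * E_bound Q d
     \<and> (\<forall>m\<in>M. [x = b m] (mod int m))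
     \<and> (\<forall>q\<in>Q. \<forall>i\<in>{1..d}. \<not> [x = c q i] (mod int q))"
proof -
  note d0 = assms(1) and finM = assms(2) and Mpos = assms(3) and finQ = assms(4) and Qne = assms(5)
    and Qpr = assms(6) and cop = assms(7) and MQ = assms(8) and minQ = assms(9)
  define n where "n = card Q"
  have n1: "n \<ge> 1" using finQ Qne n_def by (simp add: Suc_le_eq card_gt_0_iff)
  define DD where "DD = real d + 1"
  define qs where "qs = sorted_list_of_set Q"
  have qs: "distinct qs" "set qs = Q" "length qs = n" using finQ by (auto simp: qs_def n_def)
  define C where "C = (\<lambda>q. (\<lambda>i. c q i mod int q) ` {1..d})"
  define B where "B = (\<lambda>q::nat. {x::int. x mod int q \<in> C q})"
  define xf where "xf = (\<lambda>q. real (card (C q)) / real q)"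
  have qbig: "q \<ge> d + 1" if "q \<in> Q" for q
    using Min_le[OF finQ that] minQ by simp
  have q0: "q > 0" if "q \<in> Q" for q using qbig[OF that] by simp
  have Csub: "C q \<subseteq> {0..<int q}" if "q \<in> Q" for q
    using q0[OF that] unfolding C_def by auto
  have Ccard: "card (C q) \<le> d" for q
    unfolding C_def using card_image_le[of "{1..d}" "\<lambda>i. c q i mod int q"] by simp
  have xf0: "0 \<le> xf q" for q unfolding xf_def by simp
  have xfle: "xf q \<le> real d / real q" if "q \<in> Q" for q
    unfolding xf_def using Ccard[of q] q0[OF that] by (simp add: divide_right_mono)
  have xfD: "xf q \<le> (DD - 1) / DD" if "q \<in> Q" for q
  proof -
    have "real d / real q \<le> real d / (real d + 1)"
      using qbig[OF that] d0 by (intro divide_left_mono) auto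
    thus ?thesis using xfle[OF that] unfolding DD_def by simp
  qed
  have DD1: "DD \<ge> 1" unfolding DD_def by simp
  have xf1: "xf q \<le> 1" if "q \<in> Q" for q
  proof -
    have "(DD - 1) / DD \<le> 1" using DD1 by simp
    thus ?thesis using xfD[OF that] by linarith
  qed
  define s where "s = sx xf qs"
  have s_eq: "s = (\<Sum>q\<in>Q. xf q)" unfolding s_def sx_def using qs by (simp add: sum_list_distinct_conv_sum_set)
  have s0: "s \<ge> 0" unfolding s_eq by (rule sum_nonneg) (simp add: xf0)
  define sg where "sg = (\<Sum>q\<in>Q. 1 / real q)"
  have s_sg: "s \<le> real d * sg"
  proof -
    have "s \<le> (\<Sum>q\<in>Q. real d / real q)" unfolding s_eq by (rule sum_mono) (rule xfle)
    also have "\<dots> = real d * sg" unfolding sg_def by (simp add: sum_distrib_left)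
    finally show ?thesis .
  qed
  define La where "La = ln (ln (real n + 1))"
  have c1: "sg \<le> 1/2 \<and> La \<ge> -1" if "n = 1"
  proof
    have "card Q = 1" using that n_def by simp
    then obtain q where Qq: "Q = {q}" by (rule card_1_singletonE)
    have "q \<ge> 2" using Qpr Qq prime_ge_2_nat by auto
    thus "sg \<le> 1/2" unfolding sg_def Qq by simp
    have "exp (-1) \<le> ln (2::real)"
    proof -
      have "exp (-1) = 1 / exp (1::real)" by (simp add: exp_minus')
      also have "\<dots> \<le> 1 / (27/10)" using e_gt_27 by (intro divide_left_mono) auto
      also have "\<dots> \<le> ln 2" using ln2_ge_two_thirds by simp
      finally show ?thesis .
    qed
    hence "ln (exp (-1)) \<le> ln (ln (2::real))" by (subst ln_le_cancel_iff) auto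
    thus "La \<ge> -1" unfolding La_def using that by simp
  qed
  have c2: "sg \<le> 2 * La + 5 \<and> La \<ge> 0" if "n \<ge> 2"
  proof
    show "sg \<le> 2 * La + 5" unfolding sg_def La_def n_def using sigma_bound[OF finQ Qpr] that n_def by simp
    have "exp 1 \<le> (3::real)" by (rule exp_le)
    hence "1 \<le> ln (3::real)" by (metis exp_le_cancel_iff exp_ln zero_less_numeral ln_exp)
    also have "ln 3 \<le> ln (real n + 1)" using that by simp
    finally show "La \<ge> 0" unfolding La_def by simp
  qed
  define g where "g = real d + 4"
  have g5: "g \<ge> 5" unfolding g_def using d0 by simp
  have gD: "g * (ln g - 1) \<ge> DD"
    using gamma_ok[of "d+1"] d0 unfolding g_def DD_def by (simp add: add.commute add.left_commute)
  define K where "K = 2 * nat \<lceil>(g * s + 1) / 2\<rceil>"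
  have gs0: "g * s \<ge> 0" using g5 s0 by simp
  define z where "z = \<lceil>(g * s + 1) / 2\<rceil>"
  have z0: "z \<ge> 0" unfolding z_def using gs0 by simp
  have Kz: "real K = 2 * real_of_int z" unfolding K_def z_def[symmetric] using z0 by simp
  have K1: "real K \<ge> g * s + 1"
  proof -
    have "(g * s + 1) / 2 \<le> real_of_int z" unfolding z_def by simp
    hence "g * s + 1 \<le> 2 * real_of_int z" by (simp add: field_simps)
    thus ?thesis using Kz by linarith
  qed
  have K2: "real K \<le> g * s + 3"
  proof -
    have "real_of_int z < (g * s + 1) / 2 + 1" unfolding z_def using ceiling_correct[of "(g * s + 1) / 2"] by linarith
    hence "2 * real_of_int z < g * s + 3" by (simp add: field_simps)
    thus ?thesis using Kz by linarith
  qed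
  have Kpos: "K \<ge> 1" using K1 gs0 by simp
  have Keven: "even K" unfolding K_def by simp
  define m where "m = K - 1"
  have mK: "Suc m = K" using Kpos m_def by simp
  have modd: "odd m" using Keven Kpos m_def by (metis Suc_pred even_Suc less_le_trans zero_less_one mK)
  define P where "P = \<Prod>M"
  have P0: "P > 0" unfolding P_def using Mpos by (simp add: prod_pos)
  have copM: "\<forall>u\<in>M. \<forall>v\<in>M. u \<noteq> v \<longrightarrow> coprime u v" using cop by blast
  obtain r0 where r0: "\<forall>x::int. (\<forall>m\<in>M. [x = b m] (mod int m)) \<longleftrightarrow> [x = r0] (mod int P)"
    using crt_set[OF finM copM, of b] unfolding P_def by blast
  have copPQ: "\<forall>q\<in>set qs. coprime (int P) (int q)"
  proof
    fix q assume "q \<in> set qs"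
    hence q: "q \<in> Q" using qs by simp
    have "coprime P q" unfolding P_def
    proof (rule prod_coprime_left)
      fix i assume "i \<in> M"
      moreover have "i \<noteq> q" using MQ q \<open>i \<in> M\<close> by auto
      ultimately show "coprime i q" using cop q by auto
    qed
    thus "coprime (int P) (int q)" by simp
  qed
  define E where "E = E_bound Q d"
  have Epos: "E > 0" unfolding E_def E_bound_def using n1 n_def by simp
  define N0 where "N0 = \<lfloor>real P * E\<rfloor>"
  have N00: "N0 \<ge> 0" unfolding N0_def using Epos P0 by simp
  define a where "a = k"
  define bb where "bb = k + N0"
  have ab: "a \<le> bb" unfolding a_def bb_def using N00 by simp
  define A0 where "A0 = {x\<in>{a..bb}. [x = r0] (mod int P)}"
  have finA0: "finite A0" unfolding A0_def by (rule finite_subset[of _ "{a..bb}"]) auto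
  have BC: "\<forall>q\<in>set qs. B q = {x. x mod int q \<in> C q} \<and> C q \<subseteq> {0..<int q}"
    using Csub qs unfolding B_def by auto
  have cnt: "\<bar>real_of_int (SS B m qs A0) - real_of_int (bb - a + 1) / real_of_int (int P) * TT xf m qs\<bar>
     \<le> ER (\<lambda>q. real (card (C q))) m qs"
    using count_main[OF qs(1) _ BC ab, of "int P" m r0] P0 copPQ qs Qpr unfolding A0_def xf_def by auto
  have bonf: "SS B m qs A0 \<le> int (GG B qs A0)" using bonferroni[OF finA0, of m B qs] modd by simp
  have ER: "ER (\<lambda>q. real (card (C q))) m qs \<le> (1 + real d * real n) ^ m"
    using ER_bound[of qs "\<lambda>q. real (card (C q))" "real d" m] Ccard qs by simp
  have xfok: "\<forall>q\<in>set qs. 0 \<le> xf q \<and> xf q \<le> 1" using xf0 xf1 qs by auto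
  have TTPP: "\<bar>TT xf m qs - PP xf qs\<bar> \<le> s ^ K / fact K"
    using TT_PP[OF xfok, of m] mK unfolding s_def by simp
  have PPl: "exp (- DD * s) \<le> PP xf qs"
    unfolding s_def by (rule PP_lower[OF DD1]) (use xf0 xfD qs in auto)
  have tail: "s ^ K / fact K \<le> exp 1 / g * exp (- DD * s)"
    by (rule tail_bound[OF s0 g5 gD K1])
  have eg: "1 - exp 1 / g \<ge> exp (-1)"
  proof -
    have "exp 1 / g \<le> (272/100) / 5" using e_less_272 g5 by (intro frac_le) auto
    moreover have "exp (-1) \<le> 1 / (27/10::real)"
    proof -
      have "exp (-1) = 1 / exp (1::real)" by (simp add: exp_minus')
      also have "\<dots> \<le> 1 / (27/10)" using e_gt_27 by (intro divide_left_mono) auto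
      finally show ?thesis .
    qed
    ultimately show ?thesis by simp
  qed
  have TTl: "TT xf m qs \<ge> exp (- DD * s - 1)"
  proof -
    have "TT xf m qs \<ge> PP xf qs - s ^ K / fact K" using TTPP by linarith
    moreover have "PP xf qs - s ^ K / fact K \<ge> (1 - exp 1 / g) * exp (- DD * s)"
      using PPl tail by (simp add: algebra_simps)
    moreover have "(1 - exp 1 / g) * exp (- DD * s) \<ge> exp (-1) * exp (- DD * s)"
      by (rule mult_right_mono[OF eg]) simp
    moreover have "exp (-1) * exp (- DD * s) = exp (- DD * s - 1)" by (simp add: exp_add[symmetric])
    ultimately show ?thesis by linarith
  qed
  have Lc: "real_of_int (bb - a + 1) / real_of_int (int P) > E"
  proof -
    have "real P * E < real_of_int N0 + 1" unfolding N0_def by simp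
    hence "real P * E < real_of_int (bb - a + 1)" unfolding a_def bb_def by simp
    thus ?thesis using P0 by (simp add: field_simps)
  qed
  have key: "(1 + real d * real n) ^ m \<le> E * exp (- DD * s - 1)"
  proof -
    have fi: "(real K - 1) * ln (1 + real d * real n) + (real d + 1) * s + 1
     \<le> 4 * (real d + 1)^2 * (3 + La) * ln ((real d + 1) * real n)"
      by (rule final_ineq[OF _ n1 s0 s_sg c1 c2 Kpos]) (use d0 K2 g_def in auto)
    have lnE: "ln E = 4 * (real d + 1)^2 * (3 + La) * ln ((real d + 1) * real n)"
      unfolding E_def E_bound_def La_def n_def by (simp add: add.commute)
    have "real m = real K - 1" using mK by simp
    hence "real m * ln (1 + real d * real n) \<le> ln E - DD * s - 1" using fi lnE DD_def by simp
    hence "exp (real m * ln (1 + real d * real n)) \<le> exp (ln E - DD * s - 1)" by simp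
    moreover have "exp (real m * ln (1 + real d * real n)) = (1 + real d * real n) ^ m"
    proof -
      have "0 < 1 + real d * real n" by (simp add: add_pos_nonneg)
      thus ?thesis by (simp only: exp_of_nat_mult) simp
    qed
    moreover have "exp (ln E - DD * s - 1) = E * exp (- DD * s - 1)"
      using Epos by (simp add: exp_diff exp_minus' exp_add field_simps)
    ultimately show ?thesis by simp
  qed
  have Spos: "real_of_int (SS B m qs A0) > 0"
  proof -
    have TTp: "TT xf m qs > 0" using TTl by (smt (verit) exp_gt_zero)
    have "real_of_int (SS B m qs A0) \<ge> real_of_int (bb - a + 1) / real_of_int (int P) * TT xf m qs - (1 + real d * real n) ^ m"
      using cnt ER by linarith
    moreover have "real_of_int (bb - a + 1) / real_of_int (int P) * TT xf m qs > E * TT xf m qs"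
      using mult_strict_right_mono[OF Lc TTp] by simp
    moreover have "E * TT xf m qs \<ge> E * exp (- DD * s - 1)" using TTl Epos by simp
    ultimately show ?thesis using key by linarith
  qed
  hence "GG B qs A0 > 0" using bonf by linarith
  hence "{x\<in>A0. \<forall>q\<in>set qs. x \<notin> B q} \<noteq> {}" unfolding GG_def by (metis card.empty less_irrefl)
  then obtain x where x: "x \<in> A0" "\<forall>q\<in>Q. x \<notin> B q" using qs by auto
  have xa: "k \<le> x" "x \<le> k + N0" using x(1) unfolding A0_def a_def bb_def by auto
  have "real_of_int N0 \<le> real P * E" unfolding N0_def by simp
  hence xr: "real_of_int x \<le> real_of_int k + real (\<Prod>M) * E_bound Q d"
    using xa unfolding P_def E_def by linarith
  have xm: "\<forall>m\<in>M. [x = b m] (mod int m)" using r0 x(1) unfolding A0_def by auto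
  have xq: "\<forall>q\<in>Q. \<forall>i\<in>{1..d}. \<not> [x = c q i] (mod int q)"
  proof (intro ballI notI)
    fix q i assume q: "q \<in> Q" and i: "i \<in> {1..d}" and h: "[x = c q i] (mod int q)"
    have "x mod int q = c q i mod int q" using h by (simp add: cong_def)
    hence "x mod int q \<in> C q" unfolding C_def using i by auto
    hence "x \<in> B q" unfolding B_def by simp
    thus False using x(2) q by auto
  qed
  show ?thesis using xa xr xm xq by blast
qed

end
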